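(* Let $L$ be a component of a $T^*$-colored link diagram whose labels lie in $\{\pm i,\pm j,\pm k\}\cup\{\tfrac{1\pm i\pm j\pm k}{2}\}$. For a basepoint $b$ on an arc of $L$, let $n$ be the order of $\chi(b)$ and let $Q'(L,b)\in\mathbb{Z}_n$ be the exponent with $q(L,b)=\chi(b)^{Q'(L,b)}$. Then $Q'(L,b)$ does not depend on the choice of the basepoint $b$ on $L$.
   Context: $T^*=\{\pm1,\pm i,\pm j,\pm k,\tfrac{\pm1\pm i\pm j\pm k}{2}\}$ is the binary tetrahedral group (unit quaternions, all sign combinations). A $T^*$-colored link diagram is an oriented diagram of a tame link $\mathcal L\subset\mathbb{R}^3$ together with a homomorphism $\phi:\pi_1(\mathbb{R}^3\setminus\mathcal L)\to T^*$, in which each arc carries the label $\phi(m_a)$ of its Wirtinger meridian (with respect to a basepoint above the projection plane and the orientation of the arc); $\chi(b)$ denotes the label of the arc containing $b$. All labels on a component are conjugate, and all labels on $L$ have the same order $n$. At each crossing $c$ where a component passes under an over-arc with label $g$, with incoming under-arc label $x$ and outgoing label $x'$, the Wirtinger relation $x'=g^{\varepsilon_c}xg^{-\varepsilon_c}$ holds, $\varepsilon_c\in\{\pm1\}$ determined by the sign of the crossing. Traversing $L$ from $b$ along its orientation, let $c_1,\dots,c_m$ be the successive crossings where $L$ passes under an arc whose label is not $-1$, with over-arc labels $g_1,\dots,g_m$, and set $q(L,b)=g_m^{\varepsilon_{c_m}}\cdots g_1^{\varepsilon_{c_1}}$. For such $\chi(b)$, $q(L,b)$ is a power of $\chi(b)$,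 so $Q'(L,b)$ (the discrete logarithm of $q(L,b)$ to base $\chi(b)$) is a well-defined element of $\mathbb{Z}_n$. *)

theory Defs
  imports Complex_Main
begin

datatype quat = Quat real real real real

fun qmul :: "quat \<Rightarrow> quat \<Rightarrow> quat" where
  "qmul (Quat a1 b1 c1 d1) (Quat a2 b2 c2 d2) =
     Quat (a1*a2 - b1*b2 - c1*c2 - d1*d2)
          (a1*b2 + b1*a2 + c1*d2 - d1*c2)
          (a1*c2 - b1*d2 + c1*a2 + d1*b2)
          (a1*d2 + b1*c2 - c1*b2 + d1*a2)"

definition qone :: quat where "qone = Quat 1 0 0 0"

fun qinv :: "quat \<Rightarrow> quat" where
  "qinv (Quat a b c d) =
     (let n = a^2 + b^2 + c^2 + d^2 in Quat (a/n) (-b/n) (-c/n) (-d/n))"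

primrec qpow :: "quat \<Rightarrow> nat \<Rightarrow> quat" where
  "qpow x 0 = qone"
| "qpow x (Suc n) = qmul x (qpow x n)"

definition qpow_int :: "quat \<Rightarrow> int \<Rightarrow> quat" where
  "qpow_int x e = (if 0 \<le> e then qpow x (nat e) else qpow (qinv x) (nat (- e)))"

definition qord :: "quat \<Rightarrow> nat" where
  "qord x = (LEAST n. 0 < n \<and> qpow x n = qone)"

definition Tstar :: "quat set" where
  "Tstar = {Quat s 0 0 0 | s. s \<in> {1, -1}} \<union> {Quat 0 s 0 0 | s. s \<in> {1, -1}}
         \<union> {Quat 0 0 s 0 | s. s \<in> {1, -1}} \<union> {Quat 0 0 0 s | s. s \<in> {1, -1}}
         \<union> {Quat a b c d | a b c d. a \<in> {1/2, -1/2} \<and> b \<in> {1/2, -1/2}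
                                     \<and> c \<in> {1/2, -1/2} \<and> d \<in> {1/2, -1/2}}"

definition good_labels :: "quat set" where
  "good_labels = {Quat 0 s 0 0 | s. s \<in> {1, -1}}
         \<union> {Quat 0 0 s 0 | s. s \<in> {1, -1}} \<union> {Quat 0 0 0 s | s. s \<in> {1, -1}}
         \<union> {Quat (1/2) b c d | b c d. b \<in> {1/2, -1/2}
                                     \<and> c \<in> {1/2, -1/2} \<and> d \<in> {1/2, -1/2}}"

text \<open>A diagram is given by finite sets of arcs and crossings; each crossing \<open>c\<close>
  has an over-arc \<open>over c\<close>, an incoming under-arc \<open>inc c\<close>, an outgoing under-arc
  \<open>out c\<close> and a sign \<open>eps c \<in> {1,-1}\<close>.  Each arc ends at (is the incoming under-arc of)
  at most one crossing and starts at (is the outgoing under-arc of) at most one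
  crossing, and it ends at one iff it starts at one (arcs without undercrossings are
  closed loops).  A \<open>T*\<close>-coloring \<open>\<chi>\<close> is a labelling of arcs by elements of \<open>T*\<close>
  satisfying the Wirtinger relation at every crossing; by the Wirtinger presentation
  these are exactly the homomorphisms \<open>\<pi>\<^sub>1(\<real>\<^sup>3 - L) \<rightarrow> T*\<close>.\<close>

definition colored_diagram ::
  "'a set \<Rightarrow> 'c set \<Rightarrow> ('c \<Rightarrow> 'a) \<Rightarrow> ('c \<Rightarrow> 'a) \<Rightarrow> ('c \<Rightarrow> 'a) \<Rightarrow> ('c \<Rightarrow> int)
     \<Rightarrow> ('a \<Rightarrow> quat) \<Rightarrow> bool" where
  "colored_diagram A C over inc out eps \<chi> \<longleftrightarrow>
     finite A \<and> finite C \<and>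
     (\<forall>c\<in>C. over c \<in> A \<and> inc c \<in> A \<and> out c \<in> A \<and> eps c \<in> {1, -1}) \<and>
     (\<forall>c\<in>C. \<forall>c'\<in>C. inc c = inc c' \<longrightarrow> c = c') \<and>
     (\<forall>c\<in>C. \<forall>c'\<in>C. out c = out c' \<longrightarrow> c = c') \<and>
     (\<forall>a\<in>A. (\<exists>c\<in>C. inc c = a) \<longleftrightarrow> (\<exists>c\<in>C. out c = a)) \<and>
     (\<forall>a\<in>A. \<chi> a \<in> Tstar) \<and>
     (\<forall>c\<in>C. \<chi> (out c) = qmul (qmul (qpow_int (\<chi> (over c)) (eps c)) (\<chi> (inc c)))
                                  (qpow_int (\<chi> (over c)) (- eps c)))"

text \<open>A component \<open>L\<close> of the diagram, given by its arcs \<open>as ! 0, \<dots>, as ! (m-1)\<close> in the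
  order of its orientation together with the successive crossings \<open>cs ! t\<close> at which
  it passes under (\<open>cs ! t\<close> leads from arc \<open>as ! t\<close> to arc \<open>as ! ((t+1) mod m)\<close>);
  or a single arc with no undercrossing at all.\<close>

definition is_component ::
  "'a set \<Rightarrow> 'c set \<Rightarrow> ('c \<Rightarrow> 'a) \<Rightarrow> ('c \<Rightarrow> 'a) \<Rightarrow> 'a list \<Rightarrow> 'c list \<Rightarrow> bool" where
  "is_component A C inc out as cs \<longleftrightarrow>
     as \<noteq> [] \<and> distinct as \<and> set as \<subseteq> A \<and>
     ((length cs = length as \<and> distinct cs \<and> set cs \<subseteq> C \<and>
        (\<forall>t<length as. inc (cs ! t) = as ! t \<and> out (cs ! t) = as ! ((t + 1) mod length as)))
      \<or> (cs = [] \<and> length as = 1 \<and> (\<forall>c\<in>C. inc c \<noteq> as ! 0)))"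

text \<open>\<open>q(L,b)\<close> for a basepoint on the arc \<open>as ! s\<close>: traverse the undercrossings
  \<open>cs ! s, cs ! (s+1), \<dots>\<close> (cyclically), skip those whose over-arc is labelled \<open>-1\<close>,
  and multiply \<open>g\<^sub>m\<^bsup>\<epsilon>\<^sub>m\<^esup> \<cdots> g\<^sub>1\<^bsup>\<epsilon>\<^sub>1\<^esup>\<close> (later factors on the left).\<close>

definition qLb :: "('c \<Rightarrow> 'a) \<Rightarrow> ('c \<Rightarrow> int) \<Rightarrow> ('a \<Rightarrow> quat) \<Rightarrow> 'c list \<Rightarrow> nat \<Rightarrow> quat" where
  "qLb over eps \<chi> cs s =
     foldl (\<lambda>acc c. qmul (qpow_int (\<chi> (over c)) (eps c)) acc) qone
       (filter (\<lambda>c. \<chi> (over c) \<noteq> Quat (-1) 0 0 0) (rotate s cs))"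

text \<open>\<open>Q'(L,b) \<in> \<int>\<^sub>n\<close>, represented by its residue in \<open>{0..<n}\<close>, \<open>n\<close> the order of \<open>\<chi>(b)\<close>.\<close>

definition Q' :: "('c \<Rightarrow> 'a) \<Rightarrow> ('c \<Rightarrow> int) \<Rightarrow> ('a \<Rightarrow> quat) \<Rightarrow> 'a list \<Rightarrow> 'c list \<Rightarrow> nat \<Rightarrow> nat" where
  "Q' over eps \<chi> as cs s =
     (THE e. e < qord (\<chi> (as ! s)) \<and> qpow (\<chi> (as ! s)) e = qLb over eps \<chi> cs s)"

end

theory Submission
  imports Defs
begin

lemma qmul_assoc: "qmul (qmul x y) z = qmul x (qmul y z)"
  by (cases x; cases y; cases z) (simp add: algebra_simps)

lemma qmul_one_right[simp]: "qmul x qone = x"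
  by (cases x) (simp add: qone_def)

lemma qmul_one_left[simp]: "qmul qone x = x"
  by (cases x) (simp add: qone_def)

lemma qinv_alt: "qinv (Quat a b c d) = (let r = inverse (a^2+b^2+c^2+d^2) in Quat (a*r) (-(b*r)) (-(c*r)) (-(d*r)))"
  by (simp add: Let_def divide_inverse)

lemma qinv_right: assumes "a^2+b^2+c^2+d^2 \<noteq> 0" shows "qmul (Quat a b c d) (qinv (Quat a b c d)) = qone"
proof -
  define r where "r = inverse (a^2+b^2+c^2+d^2)"
  have "(a^2+b^2+c^2+d^2) * r = 1" using assms unfolding r_def by simp
  then have "a*a*r + b*b*r + c*c*r + d*d*r = 1" by (simp add: power2_eq_square algebra_simps)
  then show ?thesis unfolding qinv_alt Let_def r_def[symmetric] qone_def
    by (simp add: algebra_simps)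
qed

lemma qinv_left: assumes "a^2+b^2+c^2+d^2 \<noteq> 0" shows "qmul (qinv (Quat a b c d)) (Quat a b c d) = qone"
proof -
  define r where "r = inverse (a^2+b^2+c^2+d^2)"
  have "(a^2+b^2+c^2+d^2) * r = 1" using assms unfolding r_def by simp
  then have "a*a*r + b*b*r + c*c*r + d*d*r = 1" by (simp add: power2_eq_square algebra_simps)
  then show ?thesis unfolding qinv_alt Let_def r_def[symmetric] qone_def
    by (simp add: algebra_simps)
qed

lemma half_sq: assumes "x*2 = (1::real)" shows "x*x = 1/4"
proof -
  have h: "x = 1/2" using assms by linarith
  show ?thesis unfolding h by simp
qed

lemma Tstar_norm: assumes "Quat a b c d \<in> Tstar" shows "a^2+b^2+c^2+d^2 \<noteq> 0"
proof -
  have "a^2+b^2+c^2+d^2 = 1" using assms unfolding Tstar_def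
    by (elim UnE CollectE exE conjE) (auto simp: power2_eq_square half_sq)
  then show ?thesis by simp
qed

lemma Tstar_inv:
  assumes "g \<in> Tstar"
  shows "qmul g (qinv g) = qone \<and> qmul (qinv g) g = qone"
proof -
  obtain a b c d where g: "g = Quat a b c d" by (cases g)
  show ?thesis using assms unfolding g
    by (metis qinv_right qinv_left Tstar_norm)
qed

lemma qpow_conj:
  assumes "qmul k h = qone" "qmul h k = qone"
  shows "qpow (qmul (qmul h x) k) n = qmul (qmul h (qpow x n)) k"
proof (induction n)
  case 0 then show ?case using assms by simp
next
  case (Suc n)
  have "qpow (qmul (qmul h x) k) (Suc n) = qmul (qmul (qmul h x) k) (qmul (qmul h (qpow x n)) k)"
    using Suc by simp
  also have "\<dots> = qmul (qmul h (qmul x (qmul (qmul k h) (qpow x n)))) k"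
    by (simp add: qmul_assoc)
  also have "\<dots> = qmul (qmul h (qpow x (Suc n))) k" using assms by simp
  finally show ?case .
qed

lemma conj_inj:
  assumes "qmul k h = qone" "qmul h k = qone"
  shows "(qmul (qmul h a) k = qmul (qmul h b) k) = (a = b)"
proof
  assume e: "qmul (qmul h a) k = qmul (qmul h b) k"
  have "\<And>a. qmul (qmul k (qmul (qmul h a) k)) h = a"
    using assms by (simp add: qmul_assoc flip: qmul_assoc[of k h])
  from this[of a] this[of b] e show "a = b" by metis
qed simp

lemma THE_step:
  assumes "qmul k h = qone" "qmul h k = qone"
    and "x' = qmul (qmul h x) k" "q' = qmul (qmul h q) k"
  shows "(THE e. e < qord x \<and> qpow x e = q) = (THE e. e < qord x' \<and> qpow x' e = q')"
proof -
  have p: "\<And>n. (qpow x' n = q') = (qpow x n = q)"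
    using assms by (simp add: qpow_conj conj_inj)
  have "(qmul (qmul h a) k = qone) = (a = qone)" for a
    using conj_inj[OF assms(1,2), of a qone] assms(2) by simp
  then have p1: "\<And>n. (qpow x' n = qone) = (qpow x n = qone)"
    using assms by (simp add: qpow_conj conj_inj)
  have "qord x = qord x'" unfolding qord_def using p1 by simp
  then show ?thesis using p by simp
qed

definition stepf :: "('c \<Rightarrow> 'a) \<Rightarrow> ('c \<Rightarrow> int) \<Rightarrow> ('a \<Rightarrow> quat) \<Rightarrow> quat \<Rightarrow> 'c \<Rightarrow> quat" where
  "stepf over eps \<chi> = (\<lambda>acc c. qmul (qpow_int (\<chi> (over c)) (eps c)) acc)"

lemma foldl_gen: "foldl (stepf over eps \<chi>) acc F = qmul (foldl (stepf over eps \<chi>) qone F) acc"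
proof (induction F arbitrary: acc rule: rev_induct)
  case Nil then show ?case by simp
next
  case (snoc c F)
  have "foldl (stepf over eps \<chi>) acc (F @ [c]) = stepf over eps \<chi> (foldl (stepf over eps \<chi>) acc F) c"
    by simp
  also have "\<dots> = stepf over eps \<chi> (qmul (foldl (stepf over eps \<chi>) qone F) acc) c"
    by (simp only: snoc.IH[of acc])
  also have "\<dots> = qmul (stepf over eps \<chi> (foldl (stepf over eps \<chi>) qone F) c) acc"
    by (simp only: stepf_def qmul_assoc)
  also have "\<dots> = qmul (foldl (stepf over eps \<chi>) qone (F @ [c])) acc"
    by simp
  finally show ?case .
qed

lemma qLb_alt: "qLb over eps \<chi> cs s = foldl (stepf over eps \<chi>) qone
       (filter (\<lambda>c. \<chi> (over c) \<noteq> Quat (-1) 0 0 0) (rotate s cs))"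
  unfolding qLb_def stepf_def by simp

lemma neg1_central: "qmul (qmul (Quat (-1) 0 0 0) x) (Quat (-1) 0 0 0) = x"
  by (cases x) simp

lemma rot_step:
  assumes "s < length cs"
  shows "rotate s cs = cs ! s # tl (rotate s cs)"
    and "rotate (Suc s) cs = tl (rotate s cs) @ [cs ! s]"
proof -
  have ne: "rotate s cs \<noteq> []" using assms by auto
  have "cs \<noteq> []" using assms by auto
  then have hd: "hd (rotate s cs) = cs ! s" using assms hd_rotate_conv_nth[of cs s] by auto
  show 1: "rotate s cs = cs ! s # tl (rotate s cs)" using ne hd by (metis list.collapse)
  show "rotate (Suc s) cs = tl (rotate s cs) @ [cs ! s]"
    by (subst rotate_Suc, subst 1) simp
qed

lemma Q'_step:
  assumes D: "colored_diagram A C over inc out eps \<chi>"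
    and m: "length cs = length as"
    and cs: "set cs \<subseteq> C"
    and io: "\<forall>t<length as. inc (cs ! t) = as ! t \<and> out (cs ! t) = as ! ((t + 1) mod length as)"
    and s: "s < length as"
  shows "Q' over eps \<chi> as cs s = Q' over eps \<chi> as cs ((s + 1) mod length as)"
proof -
  define c where "c = cs ! s"
  define g where "g = \<chi> (over c)"
  define e where "e = eps c"
  define F where "F = tl (rotate s cs)"
  define P where "P = filter (\<lambda>c. \<chi> (over c) \<noteq> Quat (-1) 0 0 0)"
  have cC: "c \<in> C" using cs s m unfolding c_def by auto
  have gT: "g \<in> Tstar" and e: "e \<in> {1, -1}"
    using D cC unfolding colored_diagram_def g_def e_def by blast+
  have x': "\<chi> (as ! ((s + 1) mod length as)) = qmul (qmul (qpow_int g e) (\<chi> (as ! s))) (qpow_int g (- e))"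
    using D cC io s unfolding colored_diagram_def g_def e_def c_def by metis
  have r0: "rotate s cs = c # F" and r1: "rotate ((s + 1) mod length as) cs = F @ [c]"
  proof -
    have "rotate (Suc s mod length cs) cs = rotate (Suc s) cs" by (metis rotate_conv_mod)
    then show "rotate s cs = c # F" "rotate ((s + 1) mod length as) cs = F @ [c]"
      using rot_step[of s cs] s m unfolding c_def F_def by auto
  qed
  have q0: "qLb over eps \<chi> cs s = foldl (stepf over eps \<chi>) qone (P (c # F))"
    and q1: "qLb over eps \<chi> cs ((s + 1) mod length as) = foldl (stepf over eps \<chi>) qone (P (F @ [c]))"
    unfolding qLb_alt P_def r0 r1 by simp_all
  show ?thesis
  proof (cases "g = Quat (-1) 0 0 0")
    case True
    have pe: "qpow_int g e = g" "qpow_int g (-e) = g" using e True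
      by (auto simp: qpow_int_def qone_def)
    have "P (c # F) = P F" "P (F @ [c]) = P F" using True unfolding P_def g_def by auto
    then have qq: "qLb over eps \<chi> cs ((s + 1) mod length as) = qmul (qmul g (qLb over eps \<chi> cs s)) g"
      using q0 q1 True neg1_central by simp
    have gg: "qmul g g = qone" using True by (simp add: qone_def)
    show ?thesis unfolding Q'_def
      by (rule THE_step[OF gg gg _ qq]) (simp only: x' pe)
  next
    case False
    define h where "h = qpow_int g e"
    define k where "k = qpow_int g (-e)"
    have hk: "qmul h k = qone" "qmul k h = qone"
      using e Tstar_inv[OF gT] unfolding h_def k_def by (auto simp: qpow_int_def)
    have P0: "P (c # F) = c # P F" "P (F @ [c]) = P F @ [c]"
      using False unfolding P_def g_def by auto
    have st: "stepf over eps \<chi> acc c = qmul h acc" for acc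
      unfolding stepf_def h_def g_def e_def by simp
    have a: "qLb over eps \<chi> cs s = qmul (foldl (stepf over eps \<chi>) qone (P F)) h"
    proof -
      have "foldl (stepf over eps \<chi>) qone (c # P F) = foldl (stepf over eps \<chi>) (stepf over eps \<chi> qone c) (P F)"
        by (simp only: foldl_Cons)
      also have "\<dots> = foldl (stepf over eps \<chi>) h (P F)" by (simp only: st qmul_one_right)
      also have "\<dots> = qmul (foldl (stepf over eps \<chi>) qone (P F)) h" by (rule foldl_gen)
      finally show ?thesis unfolding q0 P0 .
    qed
    have b: "qLb over eps \<chi> cs ((s + 1) mod length as) = qmul h (foldl (stepf over eps \<chi>) qone (P F))"
      unfolding q1 P0 using st by simp
    have qq: "qLb over eps \<chi> cs ((s + 1) mod length as) = qmul (qmul h (qLb over eps \<chi> cs s)) k"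
      unfolding a b using hk by (simp add: qmul_assoc)
    show ?thesis unfolding Q'_def
      by (rule THE_step[OF hk(2) hk(1) _ qq]) (unfold h_def k_def, rule x')
  qed
qed

theorem mainTheorem3:
  fixes A :: "'a set" and C :: "'c set"
    and over inc out :: "'c \<Rightarrow> 'a" and eps :: "'c \<Rightarrow> int" and \<chi> :: "'a \<Rightarrow> quat"
    and as :: "'a list" and cs :: "'c list" and s s' :: nat
  assumes "colored_diagram A C over inc out eps \<chi>"
    and "is_component A C inc out as cs"
    and "\<forall>a\<in>set as. \<chi> a \<in> good_labels"
    and "s < length as" and "s' < length as"
  shows "Q' over eps \<chi> as cs s = Q' over eps \<chi> as cs s'"
proof -
  have D: "(length cs = length as \<and> distinct cs \<and> set cs \<subseteq> C \<and>
        (\<forall>t<length as. inc (cs ! t) = as ! t \<and> out (cs ! t) = as ! ((t + 1) mod length as)))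
      \<or> (cs = [] \<and> length as = 1 \<and> (\<forall>c\<in>C. inc c \<noteq> as ! 0))"
    using assms(2) unfolding is_component_def by (elim conjE)
  show ?thesis
  proof (cases "length as = 1")
    case True then show ?thesis using assms(4,5) by simp
  next
    case False
    with D have main: "length cs = length as" "set cs \<subseteq> C"
       "\<forall>t<length as. inc (cs ! t) = as ! t \<and> out (cs ! t) = as ! ((t + 1) mod length as)"
      by blast+
    have all: "Q' over eps \<chi> as cs t = Q' over eps \<chi> as cs 0" if "t < length as" for t
      using that
    proof (induction t)
      case 0 show ?case by (rule refl)
    next
      case (Suc t)
      have lt: "t < length as" using Suc.prems by simp
      have md: "(t + 1) mod length as = Suc t" using Suc.prems by simp
      have "Q' over eps \<chi> as cs t = Q' over eps \<chi> as cs ((t + 1) mod length as)"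
        by (rule Q'_step[OF assms(1) main lt])
      then have "Q' over eps \<chi> as cs (Suc t) = Q' over eps \<chi> as cs t" unfolding md by (rule sym)
      also have "\<dots> = Q' over eps \<chi> as cs 0" by (rule Suc.IH[OF lt])
      finally show ?case .
    qed
    show ?thesis using all[OF assms(4)] all[OF assms(5)] by (rule trans[OF _ sym])
  qed
qed

end
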